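(* Given any instance of the 1-D Crazy Frog Puzzle, one can construct in polynomial time an instance of the 1-D Crazy Frog Puzzle in which the frog is placed on the leftmost cell of the board, such that the new instance has a solution if and only if the original one does.
   Context: 1-D Crazy Frog Puzzle: a board consisting of a single row of cells indexed $0,1,\dots,w-1$, each cell empty or blocked, a starting cell on which a frog is placed (counting as visited), and a sequence of $m$ positive integer jump lengths $J_1,\dots,J_m$, where $m$ is the number of empty cells. Question: is there a choice of signs $s_i\in\{-1,+1\}$ such that the positions $p_i=p_{i-1}+s_iJ_i$ ($p_0$ the start) always lie in $\{0,\dots,w-1\}$, are never blocked cells and are never previously visited, so that every empty cell is visited exactly once? *)

theory Defs
  imports Main
begin

text \<open>An instance: the board is a list of cells (True = blocked, False = empty),
  the start cell index, and the list of jump lengths J_1 ... J_m.\<close>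

record cfp =
  board :: "bool list"
  start :: nat
  jumps :: "nat list"

definition free_cells :: "cfp \<Rightarrow> nat set" where
  "free_cells I = {i. i < length (board I) \<and> \<not> board I ! i}"

definition valid_cfp :: "cfp \<Rightarrow> bool" where
  "valid_cfp I \<longleftrightarrow> start I \<in> free_cells I \<and> (\<forall>j \<in> set (jumps I). 0 < j)
     \<and> length (jumps I) + 1 = card (free_cells I)"

definition frog_pos :: "cfp \<Rightarrow> (nat \<Rightarrow> int) \<Rightarrow> nat \<Rightarrow> int" where
  "frog_pos I s i = int (start I) + (\<Sum>k<i. s k * int (jumps I ! k))"

definition cfp_solution :: "cfp \<Rightarrow> (nat \<Rightarrow> int) \<Rightarrow> bool" where
  "cfp_solution I s \<longleftrightarrow>
     (let m = length (jumps I); w = length (board I) in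
       (\<forall>k<m. s k = -1 \<or> s k = 1)
     \<and> (\<forall>i\<le>m. 0 \<le> frog_pos I s i \<and> frog_pos I s i < int w
               \<and> \<not> board I ! nat (frog_pos I s i))
     \<and> (\<forall>i\<le>m. \<forall>j<i. frog_pos I s i \<noteq> frog_pos I s j)
     \<and> {nat (frog_pos I s i) | i. i \<le> m} = free_cells I)"

definition cfp_solvable :: "cfp \<Rightarrow> bool" where
  "cfp_solvable I \<longleftrightarrow> (\<exists>s. cfp_solution I s)"

fun bits_of :: "nat \<Rightarrow> bool list" where
  "bits_of n = (if n = 0 then [] else odd n # bits_of (n div 2))"

text \<open>Self-delimiting item encoding: bit b becomes [True, b]; an item ends with [False, False].\<close>

definition enc_item :: "bool list \<Rightarrow> bool list" where
  "enc_item bs = concat (map (\<lambda>b. [True, b]) bs) @ [False, False]"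

definition enc_cfp :: "cfp \<Rightarrow> bool list" where
  "enc_cfp I = enc_item (board I) @ enc_item (bits_of (start I))
     @ concat (map (\<lambda>j. enc_item (bits_of j)) (jumps I))"

text \<open>Tapes are two-way infinite (indexed by int); symbols are naturals below alpha,
  0 is the blank; states are naturals below nstates, 0 is the initial state and 1 the
  halting state.\<close>

record tm =
  ntapes :: nat
  alpha :: nat
  nstates :: nat
  delta :: "nat \<Rightarrow> nat list \<Rightarrow> nat \<times> nat list \<times> int list"

definition wf_tm :: "tm \<Rightarrow> bool" where
  "wf_tm M \<longleftrightarrow> 1 \<le> ntapes M \<and> 3 \<le> alpha M \<and> 2 \<le> nstates M \<and>
     (\<forall>q rs. q < nstates M \<and> q \<noteq> 1 \<and> length rs = ntapes M \<and> (\<forall>r\<in>set rs. r < alpha M) \<longrightarrow>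
        (case delta M q rs of (q', ws, ms) \<Rightarrow>
           q' < nstates M \<and> length ws = ntapes M \<and> (\<forall>a\<in>set ws. a < alpha M)
           \<and> length ms = ntapes M \<and> (\<forall>d\<in>set ms. d \<in> {-1, 0, 1})))"

type_synonym tm_conf = "nat \<times> (nat \<Rightarrow> int \<Rightarrow> nat) \<times> (nat \<Rightarrow> int)"

definition tm_step :: "tm \<Rightarrow> tm_conf \<Rightarrow> tm_conf" where
  "tm_step M c = (case c of (q, t, h) \<Rightarrow>
     if q = 1 then c else
     (case delta M q (map (\<lambda>i. t i (h i)) [0..<ntapes M]) of (q', ws, ms) \<Rightarrow>
       (q', (\<lambda>i. if i < ntapes M then (t i)(h i := ws ! i) else t i),
            (\<lambda>i. if i < ntapes M then h i + ms ! i else h i))))"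

definition tm_run :: "tm \<Rightarrow> nat \<Rightarrow> tm_conf \<Rightarrow> tm_conf" where
  "tm_run M n c = (tm_step M ^^ n) c"

definition tm_init :: "bool list \<Rightarrow> tm_conf" where
  "tm_init x = (0, (\<lambda>i p. if i = 0 \<and> 0 \<le> p \<and> p < int (length x)
                          then (if x ! nat p then 2 else 1) else 0), (\<lambda>i. 0))"

definition tm_output :: "tm \<Rightarrow> tm_conf \<Rightarrow> bool list" where
  "tm_output M c = (case c of (q, t, h) \<Rightarrow>
     map (\<lambda>j. t (ntapes M - 1) (int j) = 2)
         [0..<(LEAST j. t (ntapes M - 1) (int j) \<notin> {1, 2})])"

definition tm_computes_within :: "tm \<Rightarrow> bool list \<Rightarrow> bool list \<Rightarrow> nat \<Rightarrow> bool" where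
  "tm_computes_within M x y n \<longleftrightarrow>
     (\<exists>n'\<le>n. fst (tm_run M n' (tm_init x)) = 1 \<and> tm_output M (tm_run M n' (tm_init x)) = y)"

end

theory Submission
  imports Defs
begin


definition tape_of :: "bool list \<Rightarrow> int \<Rightarrow> nat" where
  "tape_of x p = (if 0 \<le> p \<and> p < int (length x) then (if x ! nat p then 2 else 1) else 0)"

definition conf :: "nat \<Rightarrow> bool list \<Rightarrow> bool list \<Rightarrow> nat \<Rightarrow> tm_conf" where
  "conf q x ys a = (q, (\<lambda>i. if i = 0 then tape_of x else if i = 1 then tape_of ys else (\<lambda>p. 0)),
     (\<lambda>i. if i = 0 then int a else if i = 1 then int (length ys) else 0))"

definition dl :: "nat \<Rightarrow> nat \<Rightarrow> nat \<times> nat list \<times> int list" where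
 "dl q r = (if q = 0 then (2, [r,2], [0,1])
  else if q = 2 then (3, [r,1], [0,1])
  else if q = 3 then (if r = 2 then 4 else 5, [r,r], [1,1])
  else if q = 4 then (3, [r,r], [1,1])
  else if q = 5 then (6, [r,r], [1,1])
  else if q = 6 then (7, [r,1], [0,1])
  else if q = 7 then (8, [r,1], [0,1])
  else if q = 8 then (if r = 2 then (9, [r,2], [1,1]) else (10, [r,2], [0,1]))
  else if q = 9 then (if r = 2 then (8, [r,1], [1,1]) else (11, [r,2], [1,1]))
  else if q = 10 then (11, [r,2], [0,1])
  else if q = 11 then (if r = 0 then (1, [r,0], [0,0]) else (11, [r,r], [1,1]))
  else (1, [r,0], [0,0]))"

definition MM :: tm where
  "MM = \<lparr>ntapes = 2, alpha = 3, nstates = 12, delta = (\<lambda>q rs. dl q (rs ! 0))\<rparr>"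

lemma wf_MM: "wf_tm MM"
  unfolding wf_tm_def MM_def dl_def by auto

lemma tape_snoc: "(tape_of ys)(int (length ys) := (if b then 2 else 1)) = tape_of (ys @ [b])"
  by (auto simp: tape_of_def fun_eq_iff nth_append)

lemma tape_end: "tape_of ys (int (length ys)) = 0"
  by (simp add: tape_of_def)

lemma step_write:
  assumes "q \<noteq> 1" "dl q (tape_of x (int a)) = (q', [tape_of x (int a), if b then 2 else 1], [int d, 1])"
  shows "tm_step MM (conf q x ys a) = conf q' x (ys @ [b]) (a + d)"
proof -
  have u: "[0..<2] = [0::nat, 1]" by (simp add: upt_rec)
  show ?thesis using assms
    by (auto simp: tm_step_def conf_def MM_def u tape_end tape_snoc[symmetric] fun_eq_iff)
qed

lemma step_halt:
  assumes "length x \<le> a"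
  shows "tm_step MM (conf 11 x ys a) = conf 1 x ys a"
proof -
  have u: "[0..<2] = [0::nat, 1]" by (simp add: upt_rec)
  have s: "tape_of x (int a) = 0" using assms by (simp add: tape_of_def)
  show ?thesis
    by (auto simp: tm_step_def conf_def MM_def u tape_end s dl_def fun_eq_iff)
qed

lemma drop_cons: "drop a x = c # r \<Longrightarrow> tape_of x (int a) = (if c then 2 else 1) \<and> drop (Suc a) x = r"
proof -
  assume h: "drop a x = c # r"
  then have "a < length x" by (metis drop_all list.distinct(1) not_le)
  moreover have "x ! a = c" using h \<open>a < length x\<close> by (metis Cons_nth_drop_Suc list.inject)
  moreover have "drop (Suc a) x = r" using h \<open>a < length x\<close> by (metis Cons_nth_drop_Suc list.inject)
  ultimately show ?thesis by (simp add: tape_of_def)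
qed

lemma run_Suc: "tm_run MM (Suc k) c = tm_run MM k (tm_step MM c)"
  by (metis comp_apply funpow_Suc_right tm_run_def)

lemma run_add: "tm_run MM (k1 + k2) c = tm_run MM k2 (tm_run MM k1 c)"
  by (metis add.commute comp_apply funpow_add tm_run_def)

lemma phC: "drop a x = rest \<Longrightarrow>
   tm_run MM (Suc (length rest)) (conf 11 x ys a) = conf 1 x (ys @ rest) (a + length rest)"
proof (induction rest arbitrary: a ys)
  case Nil
  then have "length x \<le> a" by simp
  then show ?case by (simp add: run_Suc step_halt tm_run_def)
next
  case (Cons c rest)
  from drop_cons[OF Cons.prems] have t: "tape_of x (int a) = (if c then 2 else 1)"
    and d: "drop (Suc a) x = rest" by auto
  have "tm_step MM (conf 11 x ys a) = conf 11 x (ys @ [c]) (a + 1)"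
    by (rule step_write) (cases c, simp_all add: t dl_def)
  then show ?case using Cons.IH[OF d[unfolded Suc_eq_plus1]] by (simp add: run_Suc)
qed

definition pr :: "bool list \<Rightarrow> bool list" where
  "pr bs = concat (map (\<lambda>b. [True, b]) bs)"

fun incb :: "bool list \<Rightarrow> bool list" where
  "incb [] = [True]"
| "incb (True # bs) = False # incb bs"
| "incb (False # bs) = True # bs"

lemma phB: "drop a x = pr bs @ [False, False] @ rest \<Longrightarrow>
   \<exists>k a'. k \<le> length x - a + 3 \<and>
     tm_run MM k (conf 8 x ys a) = conf 1 x (ys @ pr (incb bs) @ [False, False] @ rest) a'"
proof (induction bs arbitrary: a ys)
  case Nil
  then have d: "drop a x = False # False # rest" by (simp add: pr_def)
  from drop_cons[OF d] have t: "tape_of x (int a) = 1" by simp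
  have s1: "tm_step MM (conf 8 x ys a) = conf 10 x (ys @ [True]) (a + 0)"
    by (rule step_write) (simp_all add: t dl_def)
  have s2: "tm_step MM (conf 10 x (ys @ [True]) a) = conf 11 x ((ys @ [True]) @ [True]) (a + 0)"
    by (rule step_write) (simp_all add: t dl_def)
  have c: "tm_run MM (Suc (length (False # False # rest))) (conf 11 x (ys @ [True, True]) a)
     = conf 1 x (ys @ [True, True] @ False # False # rest) (a + length (False # False # rest))"
    using phC[OF d] by simp
  have len: "length x - a = length (False # False # rest)" using d by (metis length_drop)
  show ?case
    apply (rule exI[of _ "Suc (Suc (Suc (length (False # False # rest))))"])
    using s1 s2 c len by (auto simp: run_Suc pr_def)
next
  case (Cons b bs)
  then have d: "drop a x = True # b # (pr bs @ [False, False] @ rest)" by (simp add: pr_def)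
  from drop_cons[OF d] have t: "tape_of x (int a) = 2" and d1: "drop (Suc a) x = b # (pr bs @ [False, False] @ rest)" by auto
  from drop_cons[OF d1] have t1: "tape_of x (int (Suc a)) = (if b then 2 else 1)" and d2: "drop (Suc (Suc a)) x = pr bs @ [False, False] @ rest" by auto
  have s1: "tm_step MM (conf 8 x ys a) = conf 9 x (ys @ [True]) (a + 1)"
    by (rule step_write) (simp_all add: t dl_def)
  have len: "length x - a = Suc (Suc (length x - Suc (Suc a)))" using d d2
    by (metis length_Cons length_drop)
  show ?case
  proof (cases b)
    case True
    have s2: "tm_step MM (conf 9 x (ys @ [True]) (Suc a)) = conf 8 x ((ys @ [True]) @ [False]) (Suc a + 1)"
      by (rule step_write) (insert t1, simp_all add: True dl_def)
    obtain k a' where k: "k \<le> length x - Suc (Suc a) + 3"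
      and r: "tm_run MM k (conf 8 x (ys @ [True, False]) (Suc (Suc a))) =
        conf 1 x ((ys @ [True, False]) @ pr (incb bs) @ [False, False] @ rest) a'"
      using Cons.IH[OF d2] by blast
    show ?thesis
      apply (rule exI[of _ "Suc (Suc k)"], rule exI[of _ a'])
      using s1 s2 k r len True by (auto simp: run_Suc pr_def)
  next
    case False
    have s2: "tm_step MM (conf 9 x (ys @ [True]) (Suc a)) = conf 11 x ((ys @ [True]) @ [True]) (Suc a + 1)"
      by (rule step_write) (insert t1, simp_all add: False dl_def)
    have c: "tm_run MM (Suc (length (pr bs @ [False, False] @ rest))) (conf 11 x (ys @ [True, True]) (Suc (Suc a)))
     = conf 1 x ((ys @ [True, True]) @ pr bs @ [False, False] @ rest) (Suc (Suc a) + length (pr bs @ [False, False] @ rest))"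
      using phC[OF d2] by simp
    have len2: "length x - Suc (Suc a) = length (pr bs @ [False, False] @ rest)" using d2 by (metis length_drop)
    show ?thesis
      apply (rule exI[of _ "Suc (Suc (Suc (length (pr bs @ [False, False] @ rest))))"])
      using s1 s2 c len len2 False by (auto simp: run_Suc pr_def)
  qed
qed

lemma phA: "drop a x = pr bd @ [False, False] @ pr bs @ [False, False] @ rest \<Longrightarrow>
   \<exists>k a'. k \<le> length x - a + 5 \<and>
     tm_run MM k (conf 3 x ys a) = conf 1 x (ys @ pr bd @ [False, False, False, False] @ pr (incb bs) @ [False, False] @ rest) a'"
proof (induction bd arbitrary: a ys)
  case Nil
  then have d: "drop a x = False # False # (pr bs @ [False, False] @ rest)" by (simp add: pr_def)
  from drop_cons[OF d] have t: "tape_of x (int a) = 1" and d1: "drop (Suc a) x = False # (pr bs @ [False, False] @ rest)" by auto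
  from drop_cons[OF d1] have t1: "tape_of x (int (Suc a)) = 1" and d2: "drop (Suc (Suc a)) x = pr bs @ [False, False] @ rest" by auto
  have s1: "tm_step MM (conf 3 x ys a) = conf 5 x (ys @ [False]) (a + 1)"
    by (rule step_write) (simp_all add: t dl_def)
  have s2: "tm_step MM (conf 5 x (ys @ [False]) (Suc a)) = conf 6 x ((ys @ [False]) @ [False]) (Suc a + 1)"
    by (rule step_write) (insert t1, simp_all add: dl_def)
  have s3: "tm_step MM (conf 6 x (ys @ [False, False]) (Suc (Suc a))) = conf 7 x ((ys @ [False, False]) @ [False]) (Suc (Suc a) + 0)"
    by (rule step_write) (simp_all add: dl_def)
  have s4: "tm_step MM (conf 7 x (ys @ [False, False, False]) (Suc (Suc a))) = conf 8 x ((ys @ [False, False, False]) @ [False]) (Suc (Suc a) + 0)"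
    by (rule step_write) (simp_all add: dl_def)
  obtain k a' where k: "k \<le> length x - Suc (Suc a) + 3"
      and r: "tm_run MM k (conf 8 x (ys @ [False, False, False, False]) (Suc (Suc a))) =
        conf 1 x ((ys @ [False, False, False, False]) @ pr (incb bs) @ [False, False] @ rest) a'"
    using phB[OF d2] by blast
  have len: "length x - a = Suc (Suc (length x - Suc (Suc a)))" using d d2
    by (metis length_Cons length_drop)
  show ?case
    apply (rule exI[of _ "Suc (Suc (Suc (Suc k)))"], rule exI[of _ a'])
    using s1 s2 s3 s4 k r len by (auto simp: run_Suc pr_def)
next
  case (Cons b bd)
  then have d: "drop a x = True # b # (pr bd @ [False, False] @ pr bs @ [False, False] @ rest)" by (simp add: pr_def)
  from drop_cons[OF d] have t: "tape_of x (int a) = 2" and d1: "drop (Suc a) x = b # (pr bd @ [False, False] @ pr bs @ [False, False] @ rest)" by auto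
  from drop_cons[OF d1] have t1: "tape_of x (int (Suc a)) = (if b then 2 else 1)" and d2: "drop (Suc (Suc a)) x = pr bd @ [False, False] @ pr bs @ [False, False] @ rest" by auto
  have s1: "tm_step MM (conf 3 x ys a) = conf 4 x (ys @ [True]) (a + 1)"
    by (rule step_write) (simp_all add: t dl_def)
  have s2: "tm_step MM (conf 4 x (ys @ [True]) (Suc a)) = conf 3 x ((ys @ [True]) @ [b]) (Suc a + 1)"
    by (rule step_write) (insert t1, cases b, simp_all add: dl_def)
  obtain k a' where k: "k \<le> length x - Suc (Suc a) + 5"
      and r: "tm_run MM k (conf 3 x (ys @ [True, b]) (Suc (Suc a))) =
        conf 1 x ((ys @ [True, b]) @ pr bd @ [False, False, False, False] @ pr (incb bs) @ [False, False] @ rest) a'"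
    using Cons.IH[OF d2] by blast
  have len: "length x - a = Suc (Suc (length x - Suc (Suc a)))" using d d2
    by (metis length_Cons length_drop)
  show ?case
    apply (rule exI[of _ "Suc (Suc k)"], rule exI[of _ a'])
    using s1 s2 k r len by (auto simp: run_Suc pr_def)
qed

lemma init_conf: "tm_init x = conf 0 x [] 0"
  by (auto simp: tm_init_def conf_def tape_of_def fun_eq_iff)

lemma output_conf: "tm_output MM (conf q x ys a) = ys"
proof -
  have l: "(LEAST j. tape_of ys (int j) \<notin> {1, 2}) = length ys"
    by (rule Least_equality) (auto simp: tape_of_def split: if_splits)
  have l2: "(LEAST j. \<not> j < length ys) = length ys"
    by (rule Least_equality) auto
  show ?thesis
    by (auto simp: tm_output_def conf_def MM_def l2 tape_of_def intro!: nth_equalityI)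
qed


lemma machine: "x = pr bd @ [False, False] @ pr bs @ [False, False] @ rest \<Longrightarrow>
   tm_computes_within MM x ([True, False] @ pr bd @ [False, False, False, False] @ pr (incb bs) @ [False, False] @ rest)
     (8 * (length x + 1) ^ 1)"
proof -
  assume x: "x = pr bd @ [False, False] @ pr bs @ [False, False] @ rest"
  have s1: "tm_step MM (conf 0 x [] 0) = conf 2 x ([] @ [True]) (0 + 0)"
    by (rule step_write) (simp_all add: dl_def)
  have s2: "tm_step MM (conf 2 x [True] 0) = conf 3 x ([True] @ [False]) (0 + 0)"
    by (rule step_write) (simp_all add: dl_def)
  have d: "drop 0 x = pr bd @ [False, False] @ pr bs @ [False, False] @ rest" using x by simp
  obtain k a' where k: "k \<le> length x - 0 + 5"
      and r: "tm_run MM k (conf 3 x [True, False] 0) =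
        conf 1 x ([True, False] @ pr bd @ [False, False, False, False] @ pr (incb bs) @ [False, False] @ rest) a'"
    using phA[OF d, of "[True, False]"] by auto
  have e: "tm_run MM (Suc (Suc k)) (tm_init x) = conf 1 x ([True, False] @ pr bd @ [False, False, False, False] @ pr (incb bs) @ [False, False] @ rest) a'"
    unfolding run_Suc init_conf using s1 s2 r by simp
  show ?thesis unfolding tm_computes_within_def
    apply (rule exI[of _ "Suc (Suc k)"], intro conjI)
    using k apply simp
    apply (simp only: e, simp add: conf_def)
    apply (simp only: e output_conf)
    done
qed


definition gI :: "cfp \<Rightarrow> cfp" where
  "gI I = I\<lparr>board := False # board I, start := 0, jumps := Suc (start I) # jumps I\<rparr>"

lemma bits_Suc: "bits_of (Suc n) = incb (bits_of n)"
proof (induction n rule: less_induct)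
  case (less n)
  show ?case
  proof (cases "n = 0")
    case True then show ?thesis by simp
  next
    case False
    show ?thesis
    proof (cases "even n")
      case True
      have "bits_of n = False # bits_of (n div 2)" using False True by simp
      moreover have "bits_of (Suc n) = True # bits_of (n div 2)" using True by simp
      ultimately show ?thesis by simp
    next
      case odd: False
      have "bits_of n = True # bits_of (n div 2)" using False odd by simp
      moreover have "bits_of (Suc n) = False # bits_of (Suc (n div 2))" using odd
        by simp
      moreover have "bits_of (Suc (n div 2)) = incb (bits_of (n div 2))" using False by (intro less.IH) simp
      ultimately show ?thesis by simp
    qed
  qed
qed

lemma enc_I: "enc_cfp I = pr (board I) @ [False, False] @ pr (bits_of (start I)) @ [False, False]
   @ concat (map (\<lambda>j. enc_item (bits_of j)) (jumps I))"
  by (simp add: enc_cfp_def enc_item_def pr_def del: bits_of.simps)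

lemma enc_gI: "enc_cfp (gI I) = [True, False] @ pr (board I) @ [False, False, False, False] @ pr (incb (bits_of (start I))) @ [False, False]
   @ concat (map (\<lambda>j. enc_item (bits_of j)) (jumps I))"
proof -
  have z: "bits_of 0 = []" by simp
  show ?thesis by (simp add: enc_cfp_def enc_item_def pr_def gI_def bits_Suc z del: bits_of.simps)
qed

lemma free_gI: "free_cells (gI I) = insert 0 (Suc ` free_cells I)"
proof (rule set_eqI)
  fix n show "n \<in> free_cells (gI I) \<longleftrightarrow> n \<in> insert 0 (Suc ` free_cells I)"
    by (cases n) (auto simp: free_cells_def gI_def)
qed



lemma fp0: "frog_pos (gI I) s 0 = 0"
  by (simp add: frog_pos_def gI_def)

lemma fpS: "s 0 = 1 \<Longrightarrow> frog_pos (gI I) s (Suc i) = 1 + frog_pos I (\<lambda>k. s (Suc k)) i"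
  unfolding frog_pos_def by (subst sum.lessThan_Suc_shift) (simp add: gI_def)

lemma fpS_neg: "s 0 = -1 \<Longrightarrow> frog_pos (gI I) s 1 = - int (Suc (start I))"
  by (simp add: frog_pos_def gI_def)

lemma gI_simps: "length (jumps (gI I)) = Suc (length (jumps I))" "length (board (gI I)) = Suc (length (board I))"
  "start (gI I) = 0"
  by (simp_all add: gI_def)

lemma board_gI: "board (gI I) ! Suc n = board I ! n" "board (gI I) ! 0 = False"
  by (simp_all add: gI_def)

lemma setimg: "{f i | i. i \<le> (n::nat)} = f ` {..n}" by auto

lemma nat1: "0 \<le> (p::int) \<Longrightarrow> nat (1 + p) = Suc (nat p)" by simp

lemma fwd: assumes "cfp_solution I s" shows "cfp_solution (gI I) (case_nat 1 s)"
proof -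
  let ?s = "case_nat 1 s :: nat \<Rightarrow> int"
  let ?m = "length (jumps I)"
  have S: "frog_pos (gI I) ?s (Suc i) = 1 + frog_pos I s i" for i
    using fpS[of ?s I i] by simp
  from assms have A1: "\<forall>k<?m. s k = -1 \<or> s k = 1"
    and A2: "\<forall>i\<le>?m. 0 \<le> frog_pos I s i \<and> frog_pos I s i < int (length (board I)) \<and> \<not> board I ! nat (frog_pos I s i)"
    and A3: "\<forall>i\<le>?m. \<forall>j<i. frog_pos I s i \<noteq> frog_pos I s j"
    and A4: "{nat (frog_pos I s i) | i. i \<le> ?m} = free_cells I"
    by (auto simp: cfp_solution_def Let_def)
  have B1: "\<forall>k<Suc ?m. ?s k = -1 \<or> ?s k = 1"
    using A1 by (auto split: nat.splits)
  have B2: "\<forall>i\<le>Suc ?m. 0 \<le> frog_pos (gI I) ?s i \<and> frog_pos (gI I) ?s i < int (Suc (length (board I)))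
      \<and> \<not> board (gI I) ! nat (frog_pos (gI I) ?s i)"
  proof (intro allI impI)
    fix i assume "i \<le> Suc ?m"
    then show "0 \<le> frog_pos (gI I) ?s i \<and> frog_pos (gI I) ?s i < int (Suc (length (board I)))
      \<and> \<not> board (gI I) ! nat (frog_pos (gI I) ?s i)"
      using A2 by (cases i) (auto simp: fp0 S board_gI nat1)
  qed
  have B3: "\<forall>i\<le>Suc ?m. \<forall>j<i. frog_pos (gI I) ?s i \<noteq> frog_pos (gI I) ?s j"
  proof (intro allI impI)
    fix i j assume i: "i \<le> Suc ?m" and j: "j < i"
    then obtain i' where i': "i = Suc i'" by (cases i) auto
    show "frog_pos (gI I) ?s i \<noteq> frog_pos (gI I) ?s j"
    proof (cases j)
      case 0 then show ?thesis using A2 i i' by (auto simp: fp0 S)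
    next
      case (Suc j') then show ?thesis using A3 i i' j by (auto simp: S)
    qed
  qed
  have B4: "{nat (frog_pos (gI I) ?s i) | i. i \<le> Suc ?m} = free_cells (gI I)"
  proof -
    have "{nat (frog_pos (gI I) ?s i) | i. i \<le> Suc ?m} = (\<lambda>i. nat (frog_pos (gI I) ?s i)) ` {..Suc ?m}"
      by (rule setimg)
    also have "\<dots> = insert 0 (Suc ` ((\<lambda>i. nat (frog_pos I s i)) ` {..?m}))"
      unfolding atMost_Suc_eq_insert_0 using A2 by (auto simp: fp0 S nat1 image_image intro!: image_cong)
    also have "\<dots> = insert 0 (Suc ` free_cells I)" using A4 setimg by metis
    finally show ?thesis by (simp add: free_gI)
  qed
  show ?thesis unfolding cfp_solution_def Let_def gI_simps
    using B1 B2 B3 B4 by simp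
qed

lemma bwd: assumes "cfp_solution (gI I) s" shows "cfp_solution I (\<lambda>k. s (Suc k))"
proof -
  let ?t = "\<lambda>k. s (Suc k)"
  let ?m = "length (jumps I)"
  from assms have A1: "\<forall>k<Suc ?m. s k = -1 \<or> s k = 1"
    and A2: "\<forall>i\<le>Suc ?m. 0 \<le> frog_pos (gI I) s i \<and> frog_pos (gI I) s i < int (Suc (length (board I)))
      \<and> \<not> board (gI I) ! nat (frog_pos (gI I) s i)"
    and A3: "\<forall>i\<le>Suc ?m. \<forall>j<i. frog_pos (gI I) s i \<noteq> frog_pos (gI I) s j"
    and A4: "{nat (frog_pos (gI I) s i) | i. i \<le> Suc ?m} = free_cells (gI I)"
    by (auto simp: cfp_solution_def Let_def gI_simps)
  have s0: "s 0 = 1"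
  proof (rule ccontr)
    assume "s 0 \<noteq> 1"
    then have "s 0 = -1" using A1 by auto
    then have "frog_pos (gI I) s 1 < 0" using fpS_neg[of s I] by simp
    then show False using A2 by (metis One_nat_def Suc_le_mono zero_le not_le)
  qed
  have S: "frog_pos (gI I) s (Suc i) = 1 + frog_pos I ?t i" for i
    using fpS[of s, OF s0] .
  have pos: "0 \<le> frog_pos I ?t i" if "i \<le> ?m" for i
  proof -
    have "frog_pos (gI I) s (Suc i) \<noteq> frog_pos (gI I) s 0" using A3 that by auto
    moreover have "0 \<le> frog_pos (gI I) s (Suc i)" using A2 that by auto
    ultimately show ?thesis by (simp add: S fp0)
  qed
  have B1: "\<forall>k<?m. ?t k = -1 \<or> ?t k = 1" using A1 by auto
  have B2: "\<forall>i\<le>?m. 0 \<le> frog_pos I ?t i \<and> frog_pos I ?t i < int (length (board I)) \<and> \<not> board I ! nat (frog_pos I ?t i)"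
  proof (intro allI impI)
    fix i assume i: "i \<le> ?m"
    have "frog_pos (gI I) s (Suc i) < int (Suc (length (board I)))"
      and "\<not> board (gI I) ! nat (frog_pos (gI I) s (Suc i))" using A2 i by auto
    then show "0 \<le> frog_pos I ?t i \<and> frog_pos I ?t i < int (length (board I)) \<and> \<not> board I ! nat (frog_pos I ?t i)"
      using pos[OF i] by (simp add: S nat1 board_gI)
  qed
  have B3: "\<forall>i\<le>?m. \<forall>j<i. frog_pos I ?t i \<noteq> frog_pos I ?t j"
  proof (intro allI impI)
    fix i j assume "i \<le> ?m" "j < i"
    then have "frog_pos (gI I) s (Suc i) \<noteq> frog_pos (gI I) s (Suc j)" using A3 by auto
    then show "frog_pos I ?t i \<noteq> frog_pos I ?t j" by (simp add: S)
  qed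
  have B4: "{nat (frog_pos I ?t i) | i. i \<le> ?m} = free_cells I"
  proof -
    have "insert 0 (Suc ` free_cells I) = (\<lambda>i. nat (frog_pos (gI I) s i)) ` {..Suc ?m}"
      using A4 setimg free_gI by metis
    also have "\<dots> = insert 0 (Suc ` ((\<lambda>i. nat (frog_pos I ?t i)) ` {..?m}))"
      unfolding atMost_Suc_eq_insert_0 using pos by (auto simp: fp0 S nat1 image_image intro!: image_cong)
    finally have "Suc ` free_cells I = Suc ` ((\<lambda>i. nat (frog_pos I ?t i)) ` {..?m})"
      by (metis Diff_insert_absorb image_iff nat.distinct(1))
    then have "free_cells I = (\<lambda>i. nat (frog_pos I ?t i)) ` {..?m}"
      by (simp add: inj_image_eq_iff)
    then show ?thesis using setimg by metis
  qed
  show ?thesis unfolding cfp_solution_def Let_def using B1 B2 B3 B4 by simp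
qed

lemma solv: "cfp_solvable (gI I) \<longleftrightarrow> cfp_solvable I"
  unfolding cfp_solvable_def using fwd bwd by blast

lemma valid_gI: "valid_cfp I \<Longrightarrow> valid_cfp (gI I)"
proof -
  assume v: "valid_cfp I"
  have f: "finite (free_cells I)" by (simp add: free_cells_def)
  have "card (free_cells (gI I)) = Suc (card (free_cells I))"
    unfolding free_gI using f by (simp add: card_image)
  then show ?thesis using v unfolding valid_cfp_def
    by (simp add: gI_def free_cells_def)
qed


theorem mainTheorem3:
  shows "\<exists>g :: cfp \<Rightarrow> cfp. \<exists>M c d.
     wf_tm M \<and>
     (\<forall>I. valid_cfp I \<longrightarrow>
        tm_computes_within M (enc_cfp I) (enc_cfp (g I)) (c * (length (enc_cfp I) + 1) ^ d)
        \<and> valid_cfp (g I) \<and> start (g I) = 0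
        \<and> (cfp_solvable (g I) \<longleftrightarrow> cfp_solvable I))"
proof (intro exI conjI allI impI)
  show "wf_tm MM" by (rule wf_MM)
next
  fix I assume v: "valid_cfp I"
  show "tm_computes_within MM (enc_cfp I) (enc_cfp (gI I)) (8 * (length (enc_cfp I) + 1) ^ 1)"
    unfolding enc_gI by (rule machine[OF enc_I])
  show "valid_cfp (gI I)" using v by (rule valid_gI)
  show "start (gI I) = 0" by (simp add: gI_def)
  show "cfp_solvable (gI I) \<longleftrightarrow> cfp_solvable I" by (rule solv)
qed

end
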